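(* Let $f\in\mathcal A_C$, $g\in L^1$, $F(x)=\int_{-\infty}^xf$, $G(x)=\int_{-\infty}^xg$. Then (a) $f*g=(F*g)'=(f*G)'$ as distributions; (b) for all $-\infty\le\alpha<\beta\le\infty$, $\int_\alpha^\beta f*g=F*g(\beta)-F*g(\alpha)=f*G(\beta)-f*G(\alpha)$.
   Context: $C^0(\overline{\mathbb R})$: continuous $F:\mathbb R\to\mathbb R$ with finite limits $F(\pm\infty)$, and values at $\pm\infty$ mean these limits. $\mathcal B_C=\{F\in C^0(\overline{\mathbb R}):F(-\infty)=0\}$; $\mathcal A_C=\{f\in\mathcal D'(\mathbb R): f=F'\text{ (distributional derivative) for some } F\in\mathcal B_C\}$, the primitive being unique, $\int_a^bf=F(b)-F(a)$. Alexiewicz norm: $\|f\|=\sup_I|\int_If|$ over intervals $I$. For $h\in\mathcal A_C$ with primitive $H$ and $g$ of bounded variation, $\int_{-\infty}^\infty hg=H(\infty)g(\infty)-\int_{-\infty}^\infty H\,dg$ (Henstock–Stieltjes). For $f\in\mathcal A_C$ with primitive $F$, $f(x-\cdot)$ has primitive $y\mapsto F(\infty)-F(x-y)$; for $g$ of bounded variation $f*g(x)=\int_{-\infty}^\infty f(x-y)g(y)\,dy$ (product integral). For $g\in L^1$, $f*g\in\mathcal A_C$ is the unique element with $\|f*g_n-f*g\|\to0$ for any $g_n\in L^1$ of bounded variation with $\|g_n-g\|_1\to0$ (well defined). $F*g(x)=\int_{-\infty}^\infty F(x-y)g(y)\,dy$ is a Lebesgue integral. *)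

theory Defs
  imports "HOL-Analysis.Analysis"
begin

(* B_C: primitives. An element f of A_C is represented by its (unique) primitive F in B_C. *)
definition BC :: "(real \<Rightarrow> real) \<Rightarrow> bool" where
  "BC F \<longleftrightarrow> continuous_on UNIV F \<and> (F \<longlongrightarrow> 0) at_bot \<and> (\<exists>L. (F \<longlongrightarrow> L) at_top)"

definition val_top :: "(real \<Rightarrow> real) \<Rightarrow> real" where
  "val_top F = Lim at_top F"

definition BV :: "(real \<Rightarrow> real) \<Rightarrow> bool" where
  "BV g \<longleftrightarrow> (\<exists>B. \<forall>xs::real list. sorted xs \<longrightarrow>
      (\<Sum>i<length xs - 1. \<bar>g (xs ! Suc i) - g (xs ! i)\<bar>) \<le> B)"

definition L1 :: "(real \<Rightarrow> real) \<Rightarrow> bool" where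
  "L1 g \<longleftrightarrow> integrable lborel g"

definition has_HS_integral_on :: "(real \<Rightarrow> real) \<Rightarrow> (real \<Rightarrow> real) \<Rightarrow> real \<Rightarrow> real \<Rightarrow> real \<Rightarrow> bool" where
  "has_HS_integral_on P g a b I \<longleftrightarrow>
     (\<forall>e>0. \<exists>\<gamma>. gauge \<gamma> \<and> (\<forall>D. D tagged_division_of {a..b} \<and> \<gamma> fine D \<longrightarrow>
        \<bar>(\<Sum>(x,K)\<in>D. P x * (g (Sup K) - g (Inf K))) - I\<bar> < e))"

definition has_HS_integral :: "(real \<Rightarrow> real) \<Rightarrow> (real \<Rightarrow> real) \<Rightarrow> real \<Rightarrow> bool" where
  "has_HS_integral P g I \<longleftrightarrow>
     (\<exists>J. (\<forall>a b. a \<le> b \<longrightarrow> has_HS_integral_on P g a b (J a b)) \<and>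
          ((\<lambda>(a,b). J a b) \<longlongrightarrow> I) (at_bot \<times>\<^sub>F at_top))"

definition HS_integral :: "(real \<Rightarrow> real) \<Rightarrow> (real \<Rightarrow> real) \<Rightarrow> real" where
  "HS_integral P g = (THE I. has_HS_integral P g I)"

(* f * g for f in A_C with primitive F and g of bounded variation (product integral):
   int f(x-y) g(y) dy = P(inf) g(inf) - int P dg, where P(y) = F(inf) - F(x-y), P(inf) = F(inf) *)
definition conv_BV :: "(real \<Rightarrow> real) \<Rightarrow> (real \<Rightarrow> real) \<Rightarrow> real \<Rightarrow> real" where
  "conv_BV F g x = val_top F * Lim at_top g - HS_integral (\<lambda>y. val_top F - F (x - y)) g"

(* H is the primitive of f * g (f in A_C with primitive F, g in L^1): H in B_C and for every
   sequence g_n in L^1 of bounded variation with ||g_n - g||_1 \<rightarrow> 0, the functions f * g_n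
   converge to H' in the Alexiewicz norm. *)
definition is_conv_L1_prim :: "(real \<Rightarrow> real) \<Rightarrow> (real \<Rightarrow> real) \<Rightarrow> (real \<Rightarrow> real) \<Rightarrow> bool" where
  "is_conv_L1_prim F g H \<longleftrightarrow> BC H \<and>
     (\<forall>gn :: nat \<Rightarrow> real \<Rightarrow> real.
        (\<forall>n. L1 (gn n) \<and> BV (gn n)) \<and>
        ((\<lambda>n. LINT y|lborel. \<bar>gn n y - g y\<bar>) \<longlonglongrightarrow> 0) \<longrightarrow>
        (\<forall>n a b. conv_BV F (gn n) integrable_on {a..b}) \<and>
        (\<forall>e>0. \<forall>\<^sub>F n in sequentially. \<forall>a b. a \<le> b \<longrightarrow>
            \<bar>integral {a..b} (conv_BV F (gn n)) - (H b - H a)\<bar> \<le> e))"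

definition conv_L :: "(real \<Rightarrow> real) \<Rightarrow> (real \<Rightarrow> real) \<Rightarrow> real \<Rightarrow> real" where
  "conv_L F g x = (LINT y|lborel. F (x - y) * g y)"

definition test_fun :: "(real \<Rightarrow> real) \<Rightarrow> bool" where
  "test_fun \<phi> \<longleftrightarrow> (\<forall>n x. ((deriv ^^ n) \<phi>) differentiable (at x)) \<and>
                    (\<exists>R. \<forall>x. \<bar>x\<bar> > R \<longrightarrow> \<phi> x = 0)"

definition same_dist_deriv :: "(real \<Rightarrow> real) \<Rightarrow> (real \<Rightarrow> real) \<Rightarrow> bool" where
  "same_dist_deriv P Q \<longleftrightarrow> (\<forall>\<phi>. test_fun \<phi> \<longrightarrow>
      integrable lborel (\<lambda>x. P x * deriv \<phi> x) \<and> integrable lborel (\<lambda>x. Q x * deriv \<phi> x) \<and>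
      - (LINT x|lborel. P x * deriv \<phi> x) = - (LINT x|lborel. Q x * deriv \<phi> x))"

definition ext_val :: "(real \<Rightarrow> real) \<Rightarrow> ereal \<Rightarrow> real \<Rightarrow> bool" where
  "ext_val P t v \<longleftrightarrow>
     (if t = \<infinity> then (P \<longlongrightarrow> v) at_top
      else if t = -\<infinity> then (P \<longlongrightarrow> v) at_bot
      else v = P (real_of_ereal t))"

end

theory Submission
  imports Defs
begin



lemma HS_on_unique:
  assumes "has_HS_integral_on P g a b I1" "has_HS_integral_on P g a b I2"
  shows "I1 = I2"
proof (rule ccontr)
  assume ne: "I1 \<noteq> I2"
  define e where "e = \<bar>I1 - I2\<bar> / 2"
  have e: "e > 0" using ne by (simp add: e_def)
  obtain g1 where g1: "gauge g1" "\<forall>D. D tagged_division_of {a..b} \<and> g1 fine D \<longrightarrow>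
        \<bar>(\<Sum>(x,K)\<in>D. P x * (g (Sup K) - g (Inf K))) - I1\<bar> < e"
    using assms(1)[unfolded has_HS_integral_on_def, rule_format, OF e] by (elim exE conjE) 
  obtain g2 where g2: "gauge g2" "\<forall>D. D tagged_division_of {a..b} \<and> g2 fine D \<longrightarrow>
        \<bar>(\<Sum>(x,K)\<in>D. P x * (g (Sup K) - g (Inf K))) - I2\<bar> < e"
    using assms(2)[unfolded has_HS_integral_on_def, rule_format, OF e] by (elim exE conjE) 
  obtain D where D: "D tagged_division_of {a..b}" "(\<lambda>x. g1 x \<inter> g2 x) fine D"
    using fine_division_exists_real[OF gauge_Int[OF g1(1) g2(1)]] by metis
  have f1: "g1 fine D" and f2: "g2 fine D" using D(2) unfolding fine_Int by simp_all
  have "\<bar>(\<Sum>(x,K)\<in>D. P x * (g (Sup K) - g (Inf K))) - I1\<bar> < e"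
    using g1(2) D(1) f1 by blast
  moreover have "\<bar>(\<Sum>(x,K)\<in>D. P x * (g (Sup K) - g (Inf K))) - I2\<bar> < e"
    using g2(2) D(1) f2 by blast
  moreover have "\<And>S::real. \<bar>S - I1\<bar> < \<bar>I1-I2\<bar>/2 \<Longrightarrow> \<bar>S-I2\<bar> < \<bar>I1-I2\<bar>/2 \<Longrightarrow> False" by (auto simp: abs_if split: if_splits)
  ultimately show False unfolding e_def by blast
qed

lemma prod_bot_top_nontriv: "(at_bot \<times>\<^sub>F at_top :: (real \<times> real) filter) \<noteq> bot"
  by (simp add: prod_filter_eq_bot)

lemma HS_integral_eqI:
  assumes "has_HS_integral P g I"
  shows "HS_integral P g = I"
  unfolding HS_integral_def
proof (rule the_equality)
  show "has_HS_integral P g I" by fact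
next
  fix I' assume "has_HS_integral P g I'"
  then obtain J' where J': "\<forall>a b. a \<le> b \<longrightarrow> has_HS_integral_on P g a b (J' a b)"
     "((\<lambda>(a,b). J' a b) \<longlongrightarrow> I') (at_bot \<times>\<^sub>F at_top)"
    unfolding has_HS_integral_def by blast
  obtain J where J: "\<forall>a b. a \<le> b \<longrightarrow> has_HS_integral_on P g a b (J a b)"
     "((\<lambda>(a,b). J a b) \<longlongrightarrow> I) (at_bot \<times>\<^sub>F at_top)"
    using assms unfolding has_HS_integral_def by blast
  have ev: "\<forall>\<^sub>F p in at_bot \<times>\<^sub>F at_top. (\<lambda>(a,b). J a b) p = (\<lambda>(a,b). J' a b) p"
  proof -
    have "\<forall>\<^sub>F p in at_bot \<times>\<^sub>F at_top. fst p \<le> (0::real) \<and> snd p \<ge> (0::real)"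
      using eventually_prodI[OF eventually_le_at_bot[of "0::real"] eventually_ge_at_top[of "0::real"]] by simp
    then show ?thesis
    proof (rule eventually_mono)
      fix p :: "real \<times> real" assume "fst p \<le> 0 \<and> 0 \<le> snd p"
      then have le: "fst p \<le> snd p" by linarith
      have "J (fst p) (snd p) = J' (fst p) (snd p)"
        using HS_on_unique[OF J(1)[rule_format, OF le] J'(1)[rule_format, OF le]] .
      then show "(\<lambda>(a,b). J a b) p = (\<lambda>(a,b). J' a b) p" by (simp add: case_prod_beta)
    qed
  qed
  have "((\<lambda>(a,b). J a b) \<longlongrightarrow> I') (at_bot \<times>\<^sub>F at_top)"
    using tendsto_cong[OF ev] J'(2) by (rule iffD2)
  from tendsto_unique[OF prod_bot_top_nontriv this J(2)] show "I' = I" .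
qed


lemma setint_of_int:
  fixes h :: "real \<Rightarrow> real"
  assumes "integrable lborel h" "A \<in> sets borel"
  shows "set_integrable lborel A h"
  unfolding set_integrable_def using integrable_mult_indicator[of A lborel h] assms by simp

lemma G_diff:
  fixes h :: "real \<Rightarrow> real"
  assumes h: "integrable lborel h" and uv: "u \<le> v"
  shows "(LINT y:{..v}|lborel. h y) - (LINT y:{..u}|lborel. h y) = integral {u..v} h"
    and "h integrable_on {u..v}"
proof -
  have un: "{..v} = {..u} \<union> {u<..v}" using uv by auto
  have dj: "{..u} \<inter> {u<..v} = {}" by auto
  have "(LINT y:{..v}|lborel. h y) = (LINT y:{..u}|lborel. h y) + (LINT y:{u<..v}|lborel. h y)"
    unfolding un using set_integral_Un[OF dj setint_of_int[OF h] setint_of_int[OF h]] by simp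
  moreover have "(LINT y:{u<..v}|lborel. h y) = (LINT y:{u..v}|lborel. h y)"
  proof (rule set_integral_cong_set)
    show "set_borel_measurable lborel {u..v} h" "set_borel_measurable lborel {u<..v} h"
      using setint_of_int[OF h] by (auto simp: set_borel_measurable_def set_integrable_def)
    show "AE x in lborel. (x \<in> {u..v}) = (x \<in> {u<..v})"
      using AE_lborel_singleton[of u] by eventually_elim auto
  qed
  moreover have "(LINT y:{u..v}|lborel. h y) = integral {u..v} h"
    using set_borel_integral_eq_integral(2)[OF setint_of_int[OF h]] by simp
  ultimately show "(LINT y:{..v}|lborel. h y) - (LINT y:{..u}|lborel. h y) = integral {u..v} h"
    by simp
  show "h integrable_on {u..v}"
    using set_borel_integral_eq_integral(1)[OF setint_of_int[OF h]] by simp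
qed

lemma G_top:
  fixes h :: "real \<Rightarrow> real"
  assumes h: "integrable lborel h"
  shows "((\<lambda>x. LINT y:{..x}|lborel. h y) \<longlongrightarrow> (LINT y|lborel. h y)) at_top"
  unfolding set_lebesgue_integral_def
proof (rule integral_dominated_convergence_at_top[where w="\<lambda>y. \<bar>h y\<bar>"])
  show "h \<in> borel_measurable lborel" using h by auto
  show "(\<lambda>y. indicator {..t} y *\<^sub>R h y) \<in> borel_measurable lborel" for t :: real
    using h by auto
  show "integrable lborel (\<lambda>y. \<bar>h y\<bar>)" using h by auto
  show "AE y in lborel. ((\<lambda>t. indicator {..t} y *\<^sub>R h y) \<longlongrightarrow> h y) at_top"
  proof (rule AE_I2)
    fix y :: real
    have "\<forall>\<^sub>F t in at_top. indicator {..t} y *\<^sub>R h y = h y"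
      using eventually_ge_at_top[of y] by eventually_elim (auto simp: indicator_def)
    then show "((\<lambda>t. indicator {..t} y *\<^sub>R h y) \<longlongrightarrow> h y) at_top"
      by (rule tendsto_eventually)
  qed
  show "\<forall>\<^sub>F t in at_top. AE y in lborel. norm (indicator {..t} y *\<^sub>R h y) \<le> \<bar>h y\<bar>"
    by (auto simp: indicator_def)
qed

lemma G_bot:
  fixes h :: "real \<Rightarrow> real"
  assumes h: "integrable lborel h"
  shows "((\<lambda>x. LINT y:{..x}|lborel. h y) \<longlongrightarrow> 0) at_bot"
  unfolding set_lebesgue_integral_def filterlim_at_bot_mirror
proof -
  have "((\<lambda>t. integral\<^sup>L lborel (\<lambda>y. indicator {..-t} y *\<^sub>R h y)) \<longlongrightarrow> integral\<^sup>L lborel (\<lambda>y. 0 * h y)) at_top"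
  proof (rule integral_dominated_convergence_at_top[where w="\<lambda>y. \<bar>h y\<bar>"])
    show "(\<lambda>y. indicator {..-t} y *\<^sub>R h y) \<in> borel_measurable lborel" for t :: real
      using h by auto
    show "integrable lborel (\<lambda>y. \<bar>h y\<bar>)" using h by auto
    show "AE y in lborel. ((\<lambda>t. indicator {..-t} y *\<^sub>R h y) \<longlongrightarrow> 0 * h y) at_top"
    proof (rule AE_I2)
      fix y :: real
      have "\<forall>\<^sub>F t in at_top. indicator {..-t} y *\<^sub>R h y = 0"
        using eventually_gt_at_top[of "-y"] by eventually_elim (auto simp: indicator_def)
      then show "((\<lambda>t. indicator {..-t} y *\<^sub>R h y) \<longlongrightarrow> 0 * h y) at_top"
        by (simp add: tendsto_eventually)
    qed
    show "\<forall>\<^sub>F t in at_top. AE y in lborel. norm (indicator {..-t} y *\<^sub>R h y) \<le> \<bar>h y\<bar>"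
      by (auto simp: indicator_def)
  qed (use h in auto)
  then show "((\<lambda>x. integral\<^sup>L lborel (\<lambda>y. indicator {..-x} y *\<^sub>R h y)) \<longlongrightarrow> 0) at_top" by simp
qed



lemma intg_on:
  fixes f :: "real \<Rightarrow> real"
  assumes "integrable lborel f" "S \<in> sets borel"
  shows "f integrable_on S" "(LINT y:S|lborel. f y) = integral S f"
  using set_borel_integral_eq_integral[OF setint_of_int[OF assms]] by auto

lemma intg_bounded_mult:
  fixes P h :: "real \<Rightarrow> real"
  assumes P: "continuous_on UNIV P" "\<And>y. \<bar>P y\<bar> \<le> B" and h: "integrable lborel h"
  shows "integrable lborel (\<lambda>y. P y * h y)"
proof (rule Bochner_Integration.integrable_bound[OF integrable_mult_right[OF integrable_abs[OF h], of B]])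
  show "(\<lambda>y. P y * h y) \<in> borel_measurable lborel"
    using borel_measurable_continuous_onI[OF P(1)] h by (intro borel_measurable_times) auto
  show "AE x in lborel. norm (P x * h x) \<le> norm (B * \<bar>h x\<bar>)"
  proof (rule AE_I2)
    fix x
    have "\<bar>P x\<bar> * \<bar>h x\<bar> \<le> B * \<bar>h x\<bar>" using P(2)[of x] by (simp add: mult_right_mono)
    moreover have "0 \<le> B" using P(2)[of x] by linarith
    ultimately show "norm (P x * h x) \<le> norm (B * \<bar>h x\<bar>)" by (simp add: abs_mult)
  qed
qed

lemma HS_on_abs:
  fixes P h :: "real \<Rightarrow> real"
  assumes P: "continuous_on UNIV P" "\<And>y. \<bar>P y\<bar> \<le> B" and h: "integrable lborel h" and ab: "a \<le> b"
  shows "has_HS_integral_on P (\<lambda>x. LINT y:{..x}|lborel. h y) a b (integral {a..b} (\<lambda>y. P y * h y))"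
  unfolding has_HS_integral_on_def
proof (intro allI impI)
  fix e :: real assume e: "e > 0"
  define Gh where "Gh = (\<lambda>x. LINT y:{..x}|lborel. h y)"
  define M where "M = integral {a..b} (\<lambda>y. \<bar>h y\<bar>)"
  have M0: "M \<ge> 0" unfolding M_def by (rule integral_nonneg) (use intg_on(1)[OF integrable_abs[OF h]] in auto)
  define ep where "ep = e / (M + 1)"
  have ep: "ep > 0" using e M0 by (simp add: ep_def)
  have "uniformly_continuous_on {a..b} P"
    by (rule compact_uniformly_continuous) (use P(1) continuous_on_subset in auto)
  then obtain d where d: "d > 0" "\<And>x y. x \<in> {a..b} \<Longrightarrow> y \<in> {a..b} \<Longrightarrow> dist y x < d \<Longrightarrow> dist (P y) (P x) < ep"
    unfolding uniformly_continuous_on_def using ep by metis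
  have Ph: "integrable lborel (\<lambda>y. P y * h y)" by (rule intg_bounded_mult[OF P h])
  show "\<exists>\<gamma>. gauge \<gamma> \<and> (\<forall>D. D tagged_division_of {a..b} \<and> \<gamma> fine D \<longrightarrow>
        \<bar>(\<Sum>(x,K)\<in>D. P x * ((\<lambda>x. LINT y:{..x}|lborel. h y) (Sup K) - (\<lambda>x. LINT y:{..x}|lborel. h y) (Inf K))) - integral {a..b} (\<lambda>y. P y * h y)\<bar> < e)"
  proof (intro exI conjI allI impI)
    show "gauge (\<lambda>x. ball x d)" using d(1) by (rule gauge_ball)
    fix D assume D: "D tagged_division_of {a..b} \<and> (\<lambda>x. ball x d) fine D"
    have fin: "finite D" using D by auto
    have trm: "P x * (Gh (Sup K) - Gh (Inf K)) - integral K (\<lambda>y. P y * h y) = integral K (\<lambda>y. (P x - P y) * h y)"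
      and tb: "\<bar>integral K (\<lambda>y. (P x - P y) * h y)\<bar> \<le> ep * integral K (\<lambda>y. \<bar>h y\<bar>)"
      if xK: "(x,K) \<in> D" for x K
    proof -
      obtain u v where K: "K = cbox u v" using D xK by blast
      have xinK: "x \<in> K" using D xK by blast
      then have uv: "u \<le> v" using K by auto
      have Kuv: "K = {u..v}" using K by simp
      have "Sup K = v" "Inf K = u" using uv Kuv by auto
      then have "Gh (Sup K) - Gh (Inf K) = integral K h" using G_diff(1)[OF h uv] Kuv Gh_def by simp
      also have "P x * \<dots> = integral K (\<lambda>y. P x * h y)" by simp
      finally have 1: "P x * (Gh (Sup K) - Gh (Inf K)) = integral K (\<lambda>y. P x * h y)" .
      have i1: "(\<lambda>y. P x * h y) integrable_on K" using intg_on(1)[OF integrable_mult_right[OF h]] Kuv by auto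
      have i2: "(\<lambda>y. P y * h y) integrable_on K" using intg_on(1)[OF Ph] Kuv by auto
      show "P x * (Gh (Sup K) - Gh (Inf K)) - integral K (\<lambda>y. P y * h y) = integral K (\<lambda>y. (P x - P y) * h y)"
        unfolding 1 integral_diff[OF i1 i2, symmetric] by (simp add: algebra_simps)
      have i3: "(\<lambda>y. (P x - P y) * h y) integrable_on K"
        using integrable_diff[OF i1 i2] by (simp add: algebra_simps)
      have i4: "(\<lambda>y. ep * \<bar>h y\<bar>) integrable_on K"
        using intg_on(1)[OF integrable_mult_right[OF integrable_abs[OF h]]] Kuv by auto
      have Ksub: "K \<subseteq> {a..b}" using D xK by blast
      have Kball: "K \<subseteq> ball x d" using D xK unfolding fine_def by blast
      have "norm (integral K (\<lambda>y. (P x - P y) * h y)) \<le> integral K (\<lambda>y. ep * \<bar>h y\<bar>)"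
      proof (rule integral_norm_bound_integral[OF i3 i4])
        fix y assume y: "y \<in> K"
        have "dist y x < d" using Kball y by (auto simp: dist_commute)
        moreover have "x \<in> {a..b}" "y \<in> {a..b}" using Ksub xinK y by auto
        ultimately have "\<bar>P y - P x\<bar> < ep" using d(2)[of x y] by (simp add: dist_real_def)
        then have "\<bar>P x - P y\<bar> \<le> ep" by simp
        then show "norm ((P x - P y) * h y) \<le> ep * \<bar>h y\<bar>"
          by (simp add: abs_mult mult_right_mono)
      qed
      then show "\<bar>integral K (\<lambda>y. (P x - P y) * h y)\<bar> \<le> ep * integral K (\<lambda>y. \<bar>h y\<bar>)" by simp
    qed
    have iPh: "(\<lambda>y. P y * h y) integrable_on cbox a b" using intg_on(1)[OF Ph] by auto
    have iah: "(\<lambda>y. \<bar>h y\<bar>) integrable_on cbox a b" using intg_on(1)[OF integrable_abs[OF h]] by auto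
    have D': "D tagged_division_of cbox a b" using D by simp
    have comb1: "integral {a..b} (\<lambda>y. P y * h y) = (\<Sum>(x,K)\<in>D. integral K (\<lambda>y. P y * h y))"
      using integral_combine_tagged_division_topdown[OF iPh D'] by simp
    have comb2: "M = (\<Sum>(x,K)\<in>D. integral K (\<lambda>y. \<bar>h y\<bar>))"
      using integral_combine_tagged_division_topdown[OF iah D'] unfolding M_def by simp
    have "(\<Sum>(x,K)\<in>D. P x * (Gh (Sup K) - Gh (Inf K))) - integral {a..b} (\<lambda>y. P y * h y)
        = (\<Sum>(x,K)\<in>D. P x * (Gh (Sup K) - Gh (Inf K)) - integral K (\<lambda>y. P y * h y))"
      unfolding comb1 by (simp add: sum_subtractf case_prod_unfold)
    also have "\<dots> = (\<Sum>(x,K)\<in>D. integral K (\<lambda>y. (P x - P y) * h y))"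
      by (rule sum.cong) (auto simp: trm)
    finally have eq: "(\<Sum>(x,K)\<in>D. P x * (Gh (Sup K) - Gh (Inf K))) - integral {a..b} (\<lambda>y. P y * h y)
        = (\<Sum>(x,K)\<in>D. integral K (\<lambda>y. (P x - P y) * h y))" .
    have "\<bar>\<Sum>(x,K)\<in>D. integral K (\<lambda>y. (P x - P y) * h y)\<bar> \<le> (\<Sum>(x,K)\<in>D. \<bar>integral K (\<lambda>y. (P x - P y) * h y)\<bar>)"
      by (rule order_trans[OF sum_abs]) (simp add: case_prod_unfold)
    also have "\<dots> \<le> (\<Sum>(x,K)\<in>D. ep * integral K (\<lambda>y. \<bar>h y\<bar>))"
      by (rule sum_mono) (auto simp: tb)
    also have "\<dots> = ep * M" unfolding comb2 by (simp add: sum_distrib_left case_prod_unfold)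
    also have "\<dots> < e"
    proof -
      have "ep * M = e * (M / (M + 1))" unfolding ep_def by simp
      also have "\<dots> < e * 1" using e M0 by (intro mult_strict_left_mono) auto
      finally show ?thesis by simp
    qed
    finally show "\<bar>(\<Sum>(x,K)\<in>D. P x * ((\<lambda>x. LINT y:{..x}|lborel. h y) (Sup K) - (\<lambda>x. LINT y:{..x}|lborel. h y) (Inf K))) - integral {a..b} (\<lambda>y. P y * h y)\<bar> < e"
      using eq unfolding Gh_def by simp
  qed
qed



lemma HS_abs:
  fixes P h :: "real \<Rightarrow> real"
  assumes P: "continuous_on UNIV P" "\<And>y. \<bar>P y\<bar> \<le> B" and h: "integrable lborel h"
  shows "has_HS_integral P (\<lambda>x. LINT y:{..x}|lborel. h y) (LINT y|lborel. P y * h y)"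
  unfolding has_HS_integral_def
proof (intro exI conjI allI impI)
  define q where "q = (\<lambda>y. P y * h y)"
  have q: "integrable lborel q" unfolding q_def by (rule intg_bounded_mult[OF P h])
  define Gq where "Gq = (\<lambda>x. LINT y:{..x}|lborel. q y)"
  fix a b :: real assume "a \<le> b"
  then show "has_HS_integral_on P (\<lambda>x. LINT y:{..x}|lborel. h y) a b (integral {a..b} (\<lambda>y. P y * h y))"
    by (rule HS_on_abs[OF P h])
next
  define q where "q = (\<lambda>y. P y * h y)"
  have q: "integrable lborel q" unfolding q_def by (rule intg_bounded_mult[OF P h])
  define Gq where "Gq = (\<lambda>x. LINT y:{..x}|lborel. q y)"
  have t1: "((\<lambda>p. Gq (snd p)) \<longlongrightarrow> (LINT y|lborel. q y)) (at_bot \<times>\<^sub>F at_top)"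
    unfolding Gq_def by (rule filterlim_compose[OF G_top[OF q] filterlim_snd])
  have t2: "((\<lambda>p. Gq (fst p)) \<longlongrightarrow> 0) (at_bot \<times>\<^sub>F at_top)"
    unfolding Gq_def by (rule filterlim_compose[OF G_bot[OF q] filterlim_fst])
  have t: "((\<lambda>p. Gq (snd p) - Gq (fst p)) \<longlongrightarrow> (LINT y|lborel. q y) - 0) (at_bot \<times>\<^sub>F at_top)"
    by (rule tendsto_diff[OF t1 t2])
  have ev: "\<forall>\<^sub>F p in at_bot \<times>\<^sub>F at_top. Gq (snd p) - Gq (fst p) = (\<lambda>(a,b). integral {a..b} (\<lambda>y. P y * h y)) p"
  proof -
    have "\<forall>\<^sub>F p in at_bot \<times>\<^sub>F at_top. fst p \<le> (0::real) \<and> snd p \<ge> (0::real)"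
      using eventually_prodI[OF eventually_le_at_bot[of "0::real"] eventually_ge_at_top[of "0::real"]] by simp
    then show ?thesis
    proof (rule eventually_mono)
      fix p :: "real \<times> real" assume "fst p \<le> 0 \<and> 0 \<le> snd p"
      then have le: "fst p \<le> snd p" by linarith
      show "Gq (snd p) - Gq (fst p) = (\<lambda>(a,b). integral {a..b} (\<lambda>y. P y * h y)) p"
        using G_diff(1)[OF q le] unfolding Gq_def q_def by (simp add: case_prod_beta)
    qed
  qed
  show "((\<lambda>(a,b). integral {a..b} (\<lambda>y. P y * h y)) \<longlongrightarrow> (LINT y|lborel. P y * h y)) (at_bot \<times>\<^sub>F at_top)"
    using tendsto_cong[OF ev] t unfolding q_def by simp
qed

lemma BC_bounded:
  assumes F: "BC F"
  obtains B where "\<And>x. \<bar>F x\<bar> \<le> B"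
proof -
  from F obtain L where cF: "continuous_on UNIV F" and Fb: "(F \<longlongrightarrow> 0) at_bot" and Ft: "(F \<longlongrightarrow> L) at_top"
    unfolding BC_def by blast
  have "\<forall>\<^sub>F x in at_top. dist (F x) L < 1" using Ft by (rule tendstoD) simp
  then obtain M1 where M1: "\<And>x. x \<ge> M1 \<Longrightarrow> dist (F x) L < 1" by (auto simp: eventually_at_top_linorder)
  have "\<forall>\<^sub>F x in at_bot. dist (F x) 0 < 1" using Fb by (rule tendstoD) simp
  then obtain M2 where M2: "\<And>x. x \<le> M2 \<Longrightarrow> dist (F x) 0 < 1" by (auto simp: eventually_at_bot_linorder)
  have "compact (F ` {M2..M1})" by (rule compact_continuous_image[OF continuous_on_subset[OF cF]]) auto
  then obtain C where C: "\<And>y. y \<in> F ` {M2..M1} \<Longrightarrow> norm y \<le> C"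
    using compact_imp_bounded bounded_iff by metis
  show ?thesis
  proof (rule that[of "max C (max (\<bar>L\<bar> + 1) 1)"])
    fix x
    show "\<bar>F x\<bar> \<le> max C (max (\<bar>L\<bar> + 1) 1)"
    proof (cases "x \<ge> M1")
      case True then show ?thesis using M1[of x] by (auto simp: dist_real_def)
    next
      case False
      show ?thesis
      proof (cases "x \<le> M2")
        case True then show ?thesis using M2[of x] by (auto simp: dist_real_def)
      next
        case False2: False
        then have "F x \<in> F ` {M2..M1}" using False by auto
        then show ?thesis using C by fastforce
      qed
    qed
  qed
qed

lemma Lim_eq: "((f::real\<Rightarrow>real) \<longlongrightarrow> (L::real)) at_top \<Longrightarrow> Lim at_top f = L"
  by (rule tendsto_Lim) auto

lemma conv_BV_abs:
  fixes F h :: "real \<Rightarrow> real"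
  assumes F: "BC F" and h: "integrable lborel h"
  shows "conv_BV F (\<lambda>x. LINT y:{..x}|lborel. h y) x = conv_L F h x"
proof -
  from F obtain L where cF: "continuous_on UNIV F" and Ft: "(F \<longlongrightarrow> L) at_top"
    unfolding BC_def by blast
  obtain B where B: "\<And>x. \<bar>F x\<bar> \<le> B" using BC_bounded[OF F] by blast
  have vt: "val_top F = L" unfolding val_top_def by (rule Lim_eq[OF Ft])
  have lg: "Lim at_top (\<lambda>x. LINT y:{..x}|lborel. h y) = (LINT y|lborel. h y)"
    by (rule Lim_eq[OF G_top[OF h]])
  define P where "P = (\<lambda>y. L - F (x - y))"
  have cP: "continuous_on UNIV P" unfolding P_def
    by (intro continuous_intros continuous_on_compose2[OF cF]) auto
  have bP: "\<bar>P y\<bar> \<le> \<bar>L\<bar> + B" for y unfolding P_def using B[of "x-y"] by linarith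
  have cFx: "continuous_on UNIV (\<lambda>y. F (x - y))"
    by (intro continuous_intros continuous_on_compose2[OF cF]) auto
  have i1: "integrable lborel (\<lambda>y. F (x - y) * h y)" by (rule intg_bounded_mult[OF cFx B h])
  have "HS_integral P (\<lambda>x. LINT y:{..x}|lborel. h y) = (LINT y|lborel. P y * h y)"
    by (rule HS_integral_eqI[OF HS_abs[OF cP bP h]])
  also have "\<dots> = (LINT y|lborel. L * h y - F (x - y) * h y)"
    unfolding P_def by (simp add: algebra_simps)
  also have "\<dots> = L * (LINT y|lborel. h y) - (LINT y|lborel. F (x - y) * h y)"
    using h i1 by simp
  finally show ?thesis
    unfolding conv_BV_def conv_L_def vt lg P_def by simp
qed



lemma int_shift:
  fixes f :: "real \<Rightarrow> real"
  shows "(LINT y|lborel. f (y + c)) = (LINT y|lborel. f y)"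
  using lborel_integral_real_affine[of 1 f c] by (simp add: add.commute)

lemma intg_shift:
  fixes f :: "real \<Rightarrow> real"
  assumes "integrable lborel f"
  shows "integrable lborel (\<lambda>y. f (y + c))"
  using lborel_integrable_real_affine[OF assms, of 1 c] by (simp add: add.commute)

lemma conv_L_shift:
  "conv_L F (\<lambda>y. g (y + c)) x = conv_L F g (x + c)"
  unfolding conv_L_def
  using int_shift[of "\<lambda>z. F (x + c - z) * g z" c] by (simp add: algebra_simps)

lemma BC_cont: "BC F \<Longrightarrow> continuous_on UNIV F" unfolding BC_def by blast

lemma conv_L_intg:
  assumes F: "BC F" and g: "integrable lborel g"
  shows "integrable lborel (\<lambda>y. F (x - y) * g y)"
proof -
  obtain B where B: "\<And>x. \<bar>F x\<bar> \<le> B" using BC_bounded[OF F] by blast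
  have cFx: "continuous_on UNIV (\<lambda>y. F (x - y))"
    by (intro continuous_intros continuous_on_compose2[OF BC_cont[OF F]]) auto
  show ?thesis by (rule intg_bounded_mult[OF cFx B g])
qed

lemma conv_L_cont:
  assumes F: "BC F" and g: "integrable lborel g"
  shows "isCont (conv_L F g) a"
proof -
  obtain B where B: "\<And>x. \<bar>F x\<bar> \<le> B" using BC_bounded[OF F] by blast
  have cF: "continuous_on UNIV F" using BC_cont[OF F] .
  show ?thesis
    unfolding continuous_at_sequentially comp_def
  proof (intro allI impI)
    fix X :: "nat \<Rightarrow> real" assume X: "X \<longlonglongrightarrow> a"
    show "(\<lambda>n. conv_L F g (X n)) \<longlonglongrightarrow> conv_L F g a"
      unfolding conv_L_def
    proof (rule integral_dominated_convergence[where w="\<lambda>y. B * \<bar>g y\<bar>"])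
      show "(\<lambda>y. F (a - y) * g y) \<in> borel_measurable lborel"
        using borel_measurable_integrable[OF conv_L_intg[OF F g]] by simp
      show "(\<lambda>y. F (X i - y) * g y) \<in> borel_measurable lborel" for i
        using borel_measurable_integrable[OF conv_L_intg[OF F g]] by simp
      show "integrable lborel (\<lambda>y. B * \<bar>g y\<bar>)" using g by auto
      show "AE y in lborel. (\<lambda>i. F (X i - y) * g y) \<longlonglongrightarrow> F (a - y) * g y"
      proof (rule AE_I2)
        fix y :: real
        have Xy: "(\<lambda>i. X i - y) \<longlonglongrightarrow> a - y" by (intro tendsto_intros X)
        have "(\<lambda>i. F (X i - y)) \<longlonglongrightarrow> F (a - y)"
          using continuous_on_tendsto_compose[OF cF Xy] by simp
        then show "(\<lambda>i. F (X i - y) * g y) \<longlonglongrightarrow> F (a - y) * g y" by (intro tendsto_intros)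
      qed
      show "AE y in lborel. norm (F (X i - y) * g y) \<le> B * \<bar>g y\<bar>" for i
        using B by (intro AE_I2) (simp add: abs_mult mult_right_mono)
    qed
  qed
qed

lemma conv_L_top:
  assumes F: "BC F" and g: "integrable lborel g" and L: "(F \<longlongrightarrow> L) at_top"
  shows "(conv_L F g \<longlongrightarrow> L * (LINT y|lborel. g y)) at_top"
proof -
  obtain B where B: "\<And>x. \<bar>F x\<bar> \<le> B" using BC_bounded[OF F] by blast
  have "((\<lambda>t. LINT y|lborel. F (t - y) * g y) \<longlongrightarrow> (LINT y|lborel. L * g y)) at_top"
  proof (rule integral_dominated_convergence_at_top[where w="\<lambda>y. B * \<bar>g y\<bar>"])
    show "(\<lambda>y. L * g y) \<in> borel_measurable lborel" using g by auto
    show "(\<lambda>y. F (t - y) * g y) \<in> borel_measurable lborel" for t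
      using borel_measurable_integrable[OF conv_L_intg[OF F g]] by simp
    show "integrable lborel (\<lambda>y. B * \<bar>g y\<bar>)" using g by auto
    show "AE y in lborel. ((\<lambda>t. F (t - y) * g y) \<longlongrightarrow> L * g y) at_top"
    proof (rule AE_I2)
      fix y :: real
      have "filterlim (\<lambda>t. t - y) at_top at_top"
        by (rule filterlim_tendsto_add_at_top[of "\<lambda>_. -y", simplified]) (auto intro: filterlim_ident)
      then have "((\<lambda>t. F (t - y)) \<longlongrightarrow> L) at_top" by (rule filterlim_compose[OF L])
      then show "((\<lambda>t. F (t - y) * g y) \<longlongrightarrow> L * g y) at_top" by (intro tendsto_intros)
    qed
    show "\<forall>\<^sub>F t in at_top. AE y in lborel. norm (F (t - y) * g y) \<le> B * \<bar>g y\<bar>"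
      using B by (intro always_eventually allI AE_I2) (simp add: abs_mult mult_right_mono)
  qed
  then show ?thesis unfolding conv_L_def using g by simp
qed

lemma conv_L_bot:
  assumes F: "BC F" and g: "integrable lborel g"
  shows "(conv_L F g \<longlongrightarrow> 0) at_bot"
proof -
  obtain B where B: "\<And>x. \<bar>F x\<bar> \<le> B" using BC_bounded[OF F] by blast
  have F0: "(F \<longlongrightarrow> 0) at_bot" using F unfolding BC_def by blast
  have "((\<lambda>t. LINT y|lborel. F (- t - y) * g y) \<longlongrightarrow> (LINT y|lborel. 0 * g y)) at_top"
  proof (rule integral_dominated_convergence_at_top[where w="\<lambda>y. B * \<bar>g y\<bar>"])
    show "(\<lambda>y. 0 * g y) \<in> borel_measurable lborel" using g by auto
    show "(\<lambda>y. F (- t - y) * g y) \<in> borel_measurable lborel" for t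
      using borel_measurable_integrable[OF conv_L_intg[OF F g]] by simp
    show "integrable lborel (\<lambda>y. B * \<bar>g y\<bar>)" using g by auto
    show "AE y in lborel. ((\<lambda>t. F (- t - y) * g y) \<longlongrightarrow> 0 * g y) at_top"
    proof (rule AE_I2)
      fix y :: real
      have "filterlim (\<lambda>t. - t - y) at_bot at_top"
      proof -
        have "filterlim (\<lambda>t::real. y + t) at_top at_top"
          by (rule filterlim_tendsto_add_at_top[OF tendsto_const filterlim_ident])
        then show ?thesis unfolding filterlim_uminus_at_bot by (simp add: add.commute)
      qed
      then have "((\<lambda>t. F (- t - y)) \<longlongrightarrow> 0) at_top" by (rule filterlim_compose[OF F0])
      then show "((\<lambda>t. F (- t - y) * g y) \<longlongrightarrow> 0 * g y) at_top" by (intro tendsto_intros)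
    qed
    show "\<forall>\<^sub>F t in at_top. AE y in lborel. norm (F (- t - y) * g y) \<le> B * \<bar>g y\<bar>"
      using B by (intro always_eventually allI AE_I2) (simp add: abs_mult mult_right_mono)
  qed
  then show ?thesis unfolding conv_L_def filterlim_at_bot_mirror by simp
qed



lemma G_incr:
  fixes u :: "real \<Rightarrow> real"
  assumes u: "integrable lborel u" and uv: "x \<le> y"
  shows "(LINT t:{..y}|lborel. u t) - (LINT t:{..x}|lborel. u t) = (LINT t|lborel. indicator {0..y-x} t * u (t + x))"
proof -
  have "(LINT t:{..y}|lborel. u t) - (LINT t:{..x}|lborel. u t) = integral {x..y} u" by (rule G_diff(1)[OF u uv])
  also have "\<dots> = (LINT t:{x..y}|lborel. u t)" using intg_on(2)[OF u, of "{x..y}"] by simp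
  also have "\<dots> = (LINT t|lborel. indicator {x..y} t * u t)" unfolding set_lebesgue_integral_def by simp
  also have "\<dots> = (LINT t|lborel. indicator {x..y} (t + x) * u (t + x))"
    using int_shift[of "\<lambda>t. indicator {x..y} t * u t" x] by simp
  also have "\<dots> = (LINT t|lborel. indicator {0..y-x} t * u (t + x))"
    by (rule Bochner_Integration.integral_cong) (auto simp: indicator_def)
  finally show ?thesis .
qed

lemma G_mono:
  fixes u :: "real \<Rightarrow> real"
  assumes u: "integrable lborel u" and nn: "\<And>y. u y \<ge> 0"
  shows "mono (\<lambda>x. LINT t:{..x}|lborel. u t)"
proof (rule monoI)
  fix x y :: real assume xy: "x \<le> y"
  have "0 \<le> integral {x..y} u" by (rule integral_nonneg) (use intg_on(1)[OF u] nn in auto)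
  then show "(LINT t:{..x}|lborel. u t) \<le> (LINT t:{..y}|lborel. u t)" using G_diff(1)[OF u xy] by simp
qed

lemma G_abs_bound:
  fixes u :: "real \<Rightarrow> real"
  assumes u: "integrable lborel u" and xy: "x \<le> y"
  shows "\<bar>(LINT t:{..y}|lborel. u t) - (LINT t:{..x}|lborel. u t)\<bar>
     \<le> (LINT t:{..y}|lborel. \<bar>u t\<bar>) - (LINT t:{..x}|lborel. \<bar>u t\<bar>)"
proof -
  have au: "integrable lborel (\<lambda>t. \<bar>u t\<bar>)" using u by auto
  have "\<bar>integral {x..y} u\<bar> \<le> integral {x..y} (\<lambda>t. \<bar>u t\<bar>)"
    using integral_norm_bound_integral[OF intg_on(1)[OF u] intg_on(1)[OF au], of "{x..y}"] by simp
  then show ?thesis using G_diff(1)[OF u xy] G_diff(1)[OF au xy] by simp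
qed

lemma G_range:
  fixes u :: "real \<Rightarrow> real"
  assumes u: "integrable lborel u" and nn: "\<And>y. u y \<ge> 0"
  shows "0 \<le> (LINT t:{..x}|lborel. u t)" "(LINT t:{..x}|lborel. u t) \<le> (LINT t|lborel. u t)"
proof -
  show "0 \<le> (LINT t:{..x}|lborel. u t)"
    unfolding set_lebesgue_integral_def using nn by (intro Bochner_Integration.integral_nonneg) (auto simp: indicator_def)
  show "(LINT t:{..x}|lborel. u t) \<le> (LINT t|lborel. u t)"
    unfolding set_lebesgue_integral_def
    using u setint_of_int[OF u, of "{..x}"] nn
    by (intro integral_mono) (auto simp: set_integrable_def indicator_def)
qed

lemma BV_crit:
  fixes f A :: "real \<Rightarrow> real"
  assumes dom: "\<And>x y. x \<le> y \<Longrightarrow> \<bar>f y - f x\<bar> \<le> A y - A x"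
    and rng: "\<And>x. 0 \<le> A x" "\<And>x. A x \<le> C"
  shows "BV f"
  unfolding BV_def
proof (intro exI allI impI)
  fix xs :: "real list" assume s: "sorted xs"
  have "(\<Sum>i<length xs - 1. \<bar>f (xs ! Suc i) - f (xs ! i)\<bar>) \<le> (\<Sum>i<length xs - 1. A (xs ! Suc i) - A (xs ! i))"
  proof (rule sum_mono)
    fix i assume "i \<in> {..<length xs - 1}"
    then have "xs ! i \<le> xs ! Suc i" using s by (auto simp: sorted_iff_nth_mono)
    then show "\<bar>f (xs ! Suc i) - f (xs ! i)\<bar> \<le> A (xs ! Suc i) - A (xs ! i)" by (rule dom)
  qed
  also have "\<dots> = A (xs ! (length xs - 1)) - A (xs ! 0)"
    by (rule sum_lessThan_telescope)
  also have "\<dots> \<le> C" using rng[of "xs ! (length xs - 1)"] rng(1)[of "xs ! 0"] by linarith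
  finally show "(\<Sum>i<length xs - 1. \<bar>f (xs ! Suc i) - f (xs ! i)\<bar>) \<le> C" .
qed



lemma steklov_int:
  fixes u :: "real \<Rightarrow> real"
  assumes u: "integrable lborel u" and nn: "\<And>y. u y \<ge> 0" and d: "\<delta> > 0"
  defines "U \<equiv> \<lambda>x. ((LINT t:{..x+\<delta>}|lborel. u t) - (LINT t:{..x}|lborel. u t)) / \<delta>"
  shows "integrable lborel U" "(LINT x|lborel. U x) = (LINT x|lborel. u x)"
proof -
  define Gu where "Gu = (\<lambda>x. LINT t:{..x}|lborel. u t)"
  have mGu: "mono Gu" unfolding Gu_def by (rule G_mono[OF u nn])
  have [measurable]: "Gu \<in> borel_measurable borel" by (rule borel_measurable_mono[OF mGu])
  have um[measurable]: "u \<in> borel_measurable borel" using borel_measurable_integrable[OF u] by simp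
  have Ueq: "U x = (LINT t|lborel. indicator {0..\<delta>} t * u (t + x)) / \<delta>" for x
    unfolding U_def using G_incr[OF u, of x "x + \<delta>"] d by simp
  have Ueq2: "U = (\<lambda>x. (Gu (x + \<delta>) - Gu x) / \<delta>)" unfolding U_def Gu_def by simp
  have Um[measurable]: "U \<in> borel_measurable borel" unfolding Ueq2 by measurable
  have U0: "U x \<ge> 0" for x unfolding Ueq2 using mGu d
    by (auto intro!: divide_nonneg_pos simp: mono_def)
  have inner: "(\<integral>\<^sup>+t. ennreal (indicator {0..\<delta>} t * u (t + x)) \<partial>lborel) = ennreal (\<delta> * U x)" for x
  proof -
    have "integrable lborel (\<lambda>t. u (t + x) * indicator {0..\<delta>} t)"
      by (rule integrable_real_mult_indicator[OF _ intg_shift[OF u]]) simp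
    then have "integrable lborel (\<lambda>t. indicator {0..\<delta>} t * u (t + x))" by (simp add: mult.commute)
    then have "(\<integral>\<^sup>+t. ennreal (indicator {0..\<delta>} t * u (t + x)) \<partial>lborel) = ennreal (LINT t|lborel. indicator {0..\<delta>} t * u (t + x))"
      by (rule nn_integral_eq_integral) (use nn in \<open>auto simp: indicator_def\<close>)
    then show ?thesis using Ueq[of x] d by simp
  qed
  have tr: "(\<integral>\<^sup>+x. ennreal (u (t + x)) \<partial>lborel) = (\<integral>\<^sup>+x. ennreal (u x) \<partial>lborel)" for t
    using nn_integral_real_affine[of "\<lambda>x. ennreal (u x)" 1 t] by simp
  have uint: "(\<integral>\<^sup>+x. ennreal (u x) \<partial>lborel) = ennreal (LINT x|lborel. u x)"
    by (rule nn_integral_eq_integral[OF u]) (use nn in auto)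
  have "(\<integral>\<^sup>+x. ennreal (\<delta> * U x) \<partial>lborel) = (\<integral>\<^sup>+x. (\<integral>\<^sup>+t. ennreal (indicator {0..\<delta>} t * u (t + x)) \<partial>lborel) \<partial>lborel)"
    by (simp add: inner)
  also have "\<dots> = (\<integral>\<^sup>+t. (\<integral>\<^sup>+x. ennreal (indicator {0..\<delta>} t * u (t + x)) \<partial>lborel) \<partial>lborel)"
    by (rule lborel_pair.Fubini'[symmetric]) measurable
  also have "\<dots> = (\<integral>\<^sup>+t. ennreal (indicator {0..\<delta>} t) * (\<integral>\<^sup>+x. ennreal (u (t + x)) \<partial>lborel) \<partial>lborel)"
    by (subst nn_integral_cmult[symmetric]) (auto intro!: nn_integral_cong simp: ennreal_mult')
  also have "\<dots> = (\<integral>\<^sup>+t. ennreal (indicator {0..\<delta>} t) * ennreal (LINT x|lborel. u x) \<partial>lborel)"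
    by (simp add: tr uint)
  also have "\<dots> = (\<integral>\<^sup>+t. ennreal (indicator {0..\<delta>} t) \<partial>lborel) * ennreal (LINT x|lborel. u x)"
    by (rule nn_integral_multc) simp
  also have "\<dots> = ennreal \<delta> * ennreal (LINT x|lborel. u x)"
    using d by (simp add: ennreal_indicator)
  finally have eq1: "(\<integral>\<^sup>+x. ennreal (\<delta> * U x) \<partial>lborel) = ennreal \<delta> * ennreal (LINT x|lborel. u x)" .
  have "(\<integral>\<^sup>+x. ennreal (\<delta> * U x) \<partial>lborel) = ennreal \<delta> * (\<integral>\<^sup>+x. ennreal (U x) \<partial>lborel)"
    using d by (subst nn_integral_cmult[symmetric]) (auto simp: ennreal_mult')
  with eq1 have "ennreal \<delta> * (\<integral>\<^sup>+x. ennreal (U x) \<partial>lborel) = ennreal \<delta> * ennreal (LINT x|lborel. u x)" by simp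
  then have "ennreal (1/\<delta>) * (ennreal \<delta> * (\<integral>\<^sup>+x. ennreal (U x) \<partial>lborel)) = ennreal (1/\<delta>) * (ennreal \<delta> * ennreal (LINT x|lborel. u x))"
    by simp
  moreover have "ennreal (1/\<delta>) * ennreal \<delta> = 1" using d by (simp add: ennreal_mult'[symmetric])
  ultimately have nU: "(\<integral>\<^sup>+x. ennreal (U x) \<partial>lborel) = ennreal (LINT x|lborel. u x)"
    by (simp add: mult.assoc[symmetric])
  show "integrable lborel U"
    by (rule integrableI_nn_integral_finite[OF _ _ nU]) (use U0 in auto)
  have "(LINT x|lborel. U x) = enn2real (\<integral>\<^sup>+x. ennreal (U x) \<partial>lborel)"
    by (rule integral_eq_nn_integral) (use U0 in auto)
  also have "\<dots> = (LINT x|lborel. u x)" unfolding nU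
    using nn by (simp add: Bochner_Integration.integral_nonneg)
  finally show "(LINT x|lborel. U x) = (LINT x|lborel. u x)" .
qed



lemma steklov_ae:
  fixes u :: "real \<Rightarrow> real"
  assumes u: "integrable lborel u"
  shows "AE x in lborel. (\<lambda>n. ((LINT t:{..x + 1/Suc n}|lborel. u t) - (LINT t:{..x}|lborel. u t)) / (1/Suc n)) \<longlonglongrightarrow> u x"
proof -
  have iu: "\<And>a b::real. u integrable_on cbox a b" using intg_on(1)[OF u] by simp
  obtain N where N: "negligible N"
    "\<And>x e. \<lbrakk>x \<notin> N; 0 < e\<rbrakk> \<Longrightarrow> \<exists>d>0. \<forall>h. 0 < h \<and> h < d \<longrightarrow>
        norm (integral (cbox x (x + h *\<^sub>R One)) u /\<^sub>R h ^ DIM(real) - u x) < e"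
    using integrable_ccontinuous_explicit[OF iu] by blast
  have conv: "(\<lambda>n. ((LINT t:{..x + 1/Suc n}|lborel. u t) - (LINT t:{..x}|lborel. u t)) / (1/Suc n)) \<longlonglongrightarrow> u x"
    if xN: "x \<notin> N" for x
  proof (rule LIMSEQ_I)
    fix e :: real assume e: "e > 0"
    obtain d where d: "d > 0" "\<And>h. 0 < h \<and> h < d \<Longrightarrow> norm (integral (cbox x (x + h *\<^sub>R One)) u /\<^sub>R h ^ DIM(real) - u x) < e"
      using N(2)[OF xN e] by blast
    obtain M :: nat where M: "1 / d < M" using reals_Archimedean2 by blast
    show "\<exists>no. \<forall>n\<ge>no. norm (((LINT t:{..x + 1/Suc n}|lborel. u t) - (LINT t:{..x}|lborel. u t)) / (1/Suc n) - u x) < e"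
    proof (intro exI allI impI)
      fix n assume n: "n \<ge> M"
      define h where "h = 1 / real (Suc n)"
      have h0: "h > 0" unfolding h_def by simp
      have "1 / d < Suc n" using M n by linarith
      then have "h < d" unfolding h_def using d(1) by (simp add: field_simps)
      then have "norm (integral (cbox x (x + h *\<^sub>R One)) u /\<^sub>R h ^ DIM(real) - u x) < e"
        using d(2) h0 by blast
      moreover have "integral (cbox x (x + h *\<^sub>R One)) u = (LINT t:{..x + h}|lborel. u t) - (LINT t:{..x}|lborel. u t)"
        using G_diff(1)[OF u, of x "x + h"] h0 by simp
      ultimately show "norm (((LINT t:{..x + 1/Suc n}|lborel. u t) - (LINT t:{..x}|lborel. u t)) / (1/Suc n) - u x) < e"
        unfolding h_def by (simp add: divide_inverse mult.commute)
    qed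
  qed
  have "AE x in lebesgue. x \<notin> N"
    using N(1) unfolding negligible_iff_null_sets by (rule AE_not_in)
  then have "AE x in completion lborel. (\<lambda>n. ((LINT t:{..x + 1/Suc n}|lborel. u t) - (LINT t:{..x}|lborel. u t)) / (1/Suc n)) \<longlonglongrightarrow> u x"
    by eventually_elim (rule conv)
  then show ?thesis by (simp add: AE_completion_iff)
qed

lemma scheffe:
  fixes fn :: "nat \<Rightarrow> real \<Rightarrow> real" and f :: "real \<Rightarrow> real"
  assumes ifn: "\<And>n. integrable lborel (fn n)" and f: "integrable lborel f"
    and fn0: "\<And>n x. fn n x \<ge> 0" and f0: "\<And>x. f x \<ge> 0"
    and lim: "AE x in lborel. (\<lambda>n. fn n x) \<longlonglongrightarrow> f x"
    and eq: "\<And>n. (LINT x|lborel. fn n x) = (LINT x|lborel. f x)"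
  shows "(\<lambda>n. LINT x|lborel. \<bar>fn n x - f x\<bar>) \<longlonglongrightarrow> 0"
proof -
  define d where "d = (\<lambda>n x. max (f x - fn n x) 0)"
  have id: "integrable lborel (d n)" for n unfolding d_def using ifn f by auto
  have "(\<lambda>n. LINT x|lborel. d n x) \<longlonglongrightarrow> (LINT x|lborel. 0 * f x)"
  proof (rule integral_dominated_convergence[where w=f])
    show "(\<lambda>x. 0 * f x) \<in> borel_measurable lborel" using f by auto
    show "d n \<in> borel_measurable lborel" for n using id by auto
    show "integrable lborel f" by fact
    show "AE x in lborel. (\<lambda>n. d n x) \<longlonglongrightarrow> 0 * f x"
      using lim
    proof eventually_elim
      fix x assume "(\<lambda>n. fn n x) \<longlonglongrightarrow> f x"
      then have "(\<lambda>n. max (f x - fn n x) 0) \<longlonglongrightarrow> max (f x - f x) 0" by (intro tendsto_intros)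
      then show "(\<lambda>n. d n x) \<longlonglongrightarrow> 0 * f x" unfolding d_def by simp
    qed
    show "AE x in lborel. norm (d n x) \<le> f x" for n
      using fn0 f0 by (intro AE_I2) (auto simp: d_def)
  qed
  then have d0: "(\<lambda>n. LINT x|lborel. d n x) \<longlonglongrightarrow> 0" by simp
  have "(LINT x|lborel. \<bar>fn n x - f x\<bar>) = 2 * (LINT x|lborel. d n x)" for n
  proof -
    have "(LINT x|lborel. \<bar>fn n x - f x\<bar>) = (LINT x|lborel. (fn n x - f x) + 2 * d n x)"
      by (rule Bochner_Integration.integral_cong) (auto simp: d_def max_def abs_if)
    also have "\<dots> = (LINT x|lborel. fn n x) - (LINT x|lborel. f x) + 2 * (LINT x|lborel. d n x)"
      using ifn[of n] f id[of n] by simp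
    finally show ?thesis using eq[of n] by simp
  qed
  then show ?thesis using tendsto_mult[OF tendsto_const[of 2] d0] by simp
qed



definition Gf :: "(real \<Rightarrow> real) \<Rightarrow> real \<Rightarrow> real" where
  "Gf u x = (LINT t:{..x}|lborel. u t)"

definition Uf :: "(real \<Rightarrow> real) \<Rightarrow> nat \<Rightarrow> real \<Rightarrow> real" where
  "Uf u n x = (Gf u (x + 1/Suc n) - Gf u x) / (1/Suc n)"

lemma Gf_diff:
  assumes "integrable lborel u" "integrable lborel v"
  shows "Gf (\<lambda>y. u y - v y) x = Gf u x - Gf v x"
  unfolding Gf_def using setint_of_int[OF assms(1)] setint_of_int[OF assms(2)] by simp

lemma Uf_diff:
  assumes "integrable lborel u" "integrable lborel v"
  shows "Uf (\<lambda>y. u y - v y) n x = Uf u n x - Uf v n x"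
  unfolding Uf_def Gf_diff[OF assms] by (simp add: algebra_simps)

lemma Uf_nonneg_facts:
  fixes u :: "real \<Rightarrow> real"
  assumes u: "integrable lborel u" and nn: "\<And>y. u y \<ge> 0"
  shows "integrable lborel (Uf u n)" "(LINT x|lborel. Uf u n x) = (LINT x|lborel. u x)"
    "\<And>x. Uf u n x \<ge> 0"
proof -
  have d: "1 / real (Suc n) > 0" by simp
  have e: "Uf u n = (\<lambda>x. ((LINT t:{..x+1/Suc n}|lborel. u t) - (LINT t:{..x}|lborel. u t)) / (1/Suc n))"
    unfolding Uf_def Gf_def by simp
  show "integrable lborel (Uf u n)" unfolding e by (rule steklov_int(1)[OF u nn d])
  show "(LINT x|lborel. Uf u n x) = (LINT x|lborel. u x)" unfolding e by (rule steklov_int(2)[OF u nn d])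
  fix x
  have "mono (Gf u)" unfolding Gf_def by (rule G_mono[OF u nn])
  then show "Uf u n x \<ge> 0" unfolding Uf_def by (auto simp: mono_def)
qed

lemma Uf_L1_pos:
  fixes u :: "real \<Rightarrow> real"
  assumes u: "integrable lborel u" and nn: "\<And>y. u y \<ge> 0"
  shows "(\<lambda>n. LINT x|lborel. \<bar>Uf u n x - u x\<bar>) \<longlonglongrightarrow> 0"
proof (rule scheffe)
  show "integrable lborel (Uf u n)" for n by (rule Uf_nonneg_facts(1)[OF u nn])
  show "(LINT x|lborel. Uf u n x) = (LINT x|lborel. u x)" for n by (rule Uf_nonneg_facts(2)[OF u nn])
  show "Uf u n x \<ge> 0" for n x by (rule Uf_nonneg_facts(3)[OF u nn])
  show "AE x in lborel. (\<lambda>n. Uf u n x) \<longlonglongrightarrow> u x"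
    using steklov_ae[OF u] unfolding Uf_def Gf_def by simp
qed (use u nn in auto)

lemma Uf_L1:
  fixes g :: "real \<Rightarrow> real"
  assumes g: "integrable lborel g"
  shows "integrable lborel (Uf g n)" "(\<lambda>n. LINT x|lborel. \<bar>Uf g n x - g x\<bar>) \<longlonglongrightarrow> 0"
proof -
  define gp where "gp = (\<lambda>y. max (g y) 0)"
  define gm where "gm = (\<lambda>y. max (- g y) 0)"
  have igp: "integrable lborel gp" unfolding gp_def using g by auto
  have igm: "integrable lborel gm" unfolding gm_def using g by auto
  have gpm: "g = (\<lambda>y. gp y - gm y)" unfolding gp_def gm_def by (auto simp: max_def)
  have U: "Uf g n x = Uf gp n x - Uf gm n x" for n x
    by (subst gpm) (rule Uf_diff[OF igp igm])
  have U': "Uf g n = (\<lambda>x. Uf gp n x - Uf gm n x)" for n using U by auto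
  have nnp: "\<And>y. gp y \<ge> 0" and nnm: "\<And>y. gm y \<ge> 0" unfolding gp_def gm_def by auto
  show "integrable lborel (Uf g n)" for n
    unfolding U' using Uf_nonneg_facts(1)[OF igp nnp] Uf_nonneg_facts(1)[OF igm nnm] by auto
  have ip: "integrable lborel (\<lambda>x. \<bar>Uf gp n x - gp x\<bar>)" for n using Uf_nonneg_facts(1)[OF igp nnp] igp by auto
  have im: "integrable lborel (\<lambda>x. \<bar>Uf gm n x - gm x\<bar>)" for n using Uf_nonneg_facts(1)[OF igm nnm] igm by auto
  have ig: "integrable lborel (\<lambda>x. \<bar>Uf g n x - g x\<bar>)" for n
    unfolding U' using Uf_nonneg_facts(1)[OF igp nnp] Uf_nonneg_facts(1)[OF igm nnm] g by auto
  have bnd: "(LINT x|lborel. \<bar>Uf g n x - g x\<bar>) \<le> (LINT x|lborel. \<bar>Uf gp n x - gp x\<bar>) + (LINT x|lborel. \<bar>Uf gm n x - gm x\<bar>)" for n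
  proof -
    have "(LINT x|lborel. \<bar>Uf g n x - g x\<bar>) \<le> (LINT x|lborel. \<bar>Uf gp n x - gp x\<bar> + \<bar>Uf gm n x - gm x\<bar>)"
    proof (rule integral_mono[OF ig])
      show "integrable lborel (\<lambda>x. \<bar>Uf gp n x - gp x\<bar> + \<bar>Uf gm n x - gm x\<bar>)" using ip im by auto
      fix x
      have "g x = gp x - gm x" using gpm by metis
      then show "\<bar>Uf g n x - g x\<bar> \<le> \<bar>Uf gp n x - gp x\<bar> + \<bar>Uf gm n x - gm x\<bar>" using U[of n x] by linarith
    qed
    also have "\<dots> = (LINT x|lborel. \<bar>Uf gp n x - gp x\<bar>) + (LINT x|lborel. \<bar>Uf gm n x - gm x\<bar>)"
      using ip im by simp
    finally show ?thesis .
  qed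
  have lim: "(\<lambda>n. (LINT x|lborel. \<bar>Uf gp n x - gp x\<bar>) + (LINT x|lborel. \<bar>Uf gm n x - gm x\<bar>)) \<longlonglongrightarrow> 0 + 0"
    by (intro tendsto_add Uf_L1_pos[OF igp nnp] Uf_L1_pos[OF igm nnm])
  show "(\<lambda>n. LINT x|lborel. \<bar>Uf g n x - g x\<bar>) \<longlonglongrightarrow> 0"
  proof (rule tendsto_sandwich[OF _ _ tendsto_const])
    show "\<forall>\<^sub>F n in sequentially. 0 \<le> (LINT x|lborel. \<bar>Uf g n x - g x\<bar>)" by simp
    show "\<forall>\<^sub>F n in sequentially. (LINT x|lborel. \<bar>Uf g n x - g x\<bar>) \<le> (LINT x|lborel. \<bar>Uf gp n x - gp x\<bar>) + (LINT x|lborel. \<bar>Uf gm n x - gm x\<bar>)"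
      using bnd by simp
  qed (use lim in simp)
qed

lemma Uf_BV:
  fixes g :: "real \<Rightarrow> real"
  assumes g: "integrable lborel g"
  shows "BV (Uf g n)"
proof -
  define d where "d = 1 / real (Suc n)"
  have d0: "d > 0" unfolding d_def by simp
  define Ag where "Ag = Gf (\<lambda>y. \<bar>g y\<bar>)"
  have ag: "integrable lborel (\<lambda>y. \<bar>g y\<bar>)" using g by auto
  have Ab: "\<bar>Gf g y - Gf g x\<bar> \<le> Ag y - Ag x" if "x \<le> y" for x y
    unfolding Ag_def Gf_def by (rule G_abs_bound[OF g that])
  have Ar: "0 \<le> Ag x" "Ag x \<le> (LINT t|lborel. \<bar>g t\<bar>)" for x
    unfolding Ag_def Gf_def using G_range[OF ag] by auto
  show ?thesis
  proof (rule BV_crit[where A="\<lambda>x. (Ag (x + d) + Ag x) / d" and C="2 * (LINT t|lborel. \<bar>g t\<bar>) / d"])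
    fix x y :: real assume xy: "x \<le> y"
    have "\<bar>Uf g n y - Uf g n x\<bar> = \<bar>(Gf g (y + d) - Gf g (x + d)) - (Gf g y - Gf g x)\<bar> / d"
      unfolding Uf_def d_def[symmetric] using d0 by (simp add: abs_divide diff_divide_distrib[symmetric] algebra_simps)
    also have "\<dots> \<le> ((Ag (y + d) - Ag (x + d)) + (Ag y - Ag x)) / d"
      using Ab[OF xy] Ab[of "x + d" "y + d"] xy d0 by (intro divide_right_mono) auto
    also have "\<dots> = (Ag (y + d) + Ag y) / d - (Ag (x + d) + Ag x) / d" by (simp add: diff_divide_distrib[symmetric])
    finally show "\<bar>Uf g n y - Uf g n x\<bar> \<le> (Ag (y + d) + Ag y) / d - (Ag (x + d) + Ag x) / d" .
  next
    fix x
    show "0 \<le> (Ag (x + d) + Ag x) / d" using Ar d0 by simp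
    show "(Ag (x + d) + Ag x) / d \<le> 2 * (LINT t|lborel. \<bar>g t\<bar>) / d"
      using Ar[of x] Ar[of "x+d"] d0 by (intro divide_right_mono) auto
  qed
qed



lemma avg_lim:
  fixes f :: "real \<Rightarrow> real"
  assumes c: "isCont f b" and i: "\<And>a c. f integrable_on {a..c}"
  shows "(\<lambda>n. integral {b..b + 1/Suc n} f / (1/Suc n)) \<longlonglongrightarrow> f b"
proof (rule LIMSEQ_I)
  fix e :: real assume e: "e > 0"
  obtain s where s: "s > 0" "\<And>x. x \<noteq> b \<and> norm (x - b) < s \<Longrightarrow> norm (f x - f b) < e/2"
    using LIM_D[OF c[unfolded isCont_def], of "e/2"] e by auto
  have s': "\<bar>f x - f b\<bar> \<le> e/2" if "\<bar>x - b\<bar> < s" for x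
    using s(2)[of x] that e by (cases "x = b") auto
  obtain M :: nat where M: "1 / s < M" using reals_Archimedean2 by blast
  show "\<exists>no. \<forall>n\<ge>no. norm (integral {b..b + 1/Suc n} f / (1/Suc n) - f b) < e"
  proof (intro exI allI impI)
    fix n assume n: "n \<ge> M"
    define d where "d = 1 / real (Suc n)"
    have d0: "d > 0" unfolding d_def by simp
    have "1 / s < Suc n" using M n by linarith
    then have ds: "d < s" unfolding d_def using s(1) by (simp add: field_simps)
    have i1: "(\<lambda>x. f x - f b) integrable_on {b..b+d}" using i by (intro integrable_diff) auto
    have i2: "(\<lambda>x. e/2) integrable_on {b..b+d}" by (rule integrable_continuous_interval) (rule continuous_on_const)
    have "norm (integral {b..b+d} (\<lambda>x. f x - f b)) \<le> integral {b..b+d} (\<lambda>x. e/2)"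
    proof (rule integral_norm_bound_integral[OF i1 i2])
      fix x assume "x \<in> {b..b+d}"
      then have "\<bar>x - b\<bar> < s" using ds d0 by auto
      then show "norm (f x - f b) \<le> e/2" using s' by simp
    qed
    also have "\<dots> = d * (e/2)" using d0 by (simp add: content_real)
    moreover have "integral {b..b+d} (\<lambda>x. f x - f b) = integral {b..b+d} f - d * f b"
    proof -
      have ic: "(\<lambda>x. f b) integrable_on {b..b+d}" by (rule integrable_continuous_interval) (rule continuous_on_const)
      show ?thesis using integral_diff[OF i ic] d0 by simp
    qed
    ultimately have b1: "\<bar>integral {b..b+d} f - d * f b\<bar> \<le> d * (e/2)" using d0 by (simp del: integral_const_real)
    have "\<bar>integral {b..b+d} f / d - f b\<bar> = \<bar>integral {b..b+d} f - d * f b\<bar> / d"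
      using d0 by (simp add: field_simps)
    also have "\<dots> \<le> e/2" using b1 d0 by (simp add: divide_le_eq mult.commute)
    also have "\<dots> < e" using e by simp
    finally show "norm (integral {b..b + 1/Suc n} f / (1/Suc n) - f b) < e" unfolding d_def by simp
  qed
qed

lemma diffq_int:
  fixes f :: "real \<Rightarrow> real"
  assumes c: "\<And>x. isCont f x" and ab: "a \<le> b" and d: "d > 0"
  shows "integral {a..b} (\<lambda>x. (f (x + d) - f x) / d) = (integral {b..b+d} f - integral {a..a+d} f) / d"
proof -
  have i: "f integrable_on {u..v}" for u v
    by (rule integrable_continuous_interval) (simp add: c continuous_at_imp_continuous_on)
  have i2: "(\<lambda>x. f (x + d)) integrable_on {u..v}" for u v
  proof -
    have cf: "continuous_on UNIV f" by (simp add: c continuous_at_imp_continuous_on)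
    show ?thesis by (rule integrable_continuous_interval) (intro continuous_on_compose2[OF cf] continuous_intros, auto)
  qed
  have sh: "integral {a..b} (\<lambda>x. f (x + d)) = integral {a+d..b+d} f"
    using integral_shift_real_ivl[of "a+d" d "b+d" f] by simp
  have c1: "integral {a..a+d} f + integral {a+d..b+d} f = integral {a..b+d} f"
    by (rule Henstock_Kurzweil_Integration.integral_combine) (use ab d i in auto)
  have c2: "integral {a..b} f + integral {b..b+d} f = integral {a..b+d} f"
    by (rule Henstock_Kurzweil_Integration.integral_combine) (use ab d i in auto)
  have "integral {a..b} (\<lambda>x. (f (x + d) - f x) / d) = (integral {a..b} (\<lambda>x. f (x + d)) - integral {a..b} f) / d"
    using i i2 by (simp add: integral_diff integral_divide)
  also have "\<dots> = (integral {b..b+d} f - integral {a..a+d} f) / d"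
    unfolding sh using c1 c2 by (simp add: algebra_simps)
  finally show ?thesis .
qed

lemma S7:
  fixes f :: "real \<Rightarrow> real"
  assumes c: "\<And>x. isCont f x" and ab: "a \<le> b"
  shows "(\<lambda>n. integral {a..b} (\<lambda>x. (f (x + 1/Suc n) - f x) / (1/Suc n))) \<longlonglongrightarrow> f b - f a"
proof -
  have i: "f integrable_on {u..v}" for u v
    by (rule integrable_continuous_interval) (simp add: c continuous_at_imp_continuous_on)
  have "(\<lambda>n. integral {b..b + 1/Suc n} f / (1/Suc n) - integral {a..a + 1/Suc n} f / (1/Suc n)) \<longlonglongrightarrow> f b - f a"
    by (intro tendsto_diff avg_lim c i)
  moreover have "integral {a..b} (\<lambda>x. (f (x + 1/Suc n) - f x) / (1/Suc n))
      = integral {b..b + 1/Suc n} f / (1/Suc n) - integral {a..a + 1/Suc n} f / (1/Suc n)" for n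
    using diffq_int[OF c ab, of "1/Suc n"] by (simp add: algebra_simps)
  ultimately show ?thesis by simp
qed



lemma gn_eq:
  fixes g :: "real \<Rightarrow> real"
  assumes g: "integrable lborel g" and d: "d > 0"
  shows "(LINT y:{..x}|lborel. (g (y + d) - g y) / d) = (Gf g (x + d) - Gf g x) / d"
proof -
  have i1: "integrable lborel (\<lambda>y. indicator {..x} y * g (y + d))"
    using integrable_real_mult_indicator[OF _ intg_shift[OF g, of d], of "{..x}"] by (simp add: mult.commute)
  have i2: "integrable lborel (\<lambda>y. indicator {..x} y * g y)"
    using integrable_real_mult_indicator[OF _ g, of "{..x}"] by (simp add: mult.commute)
  have "(LINT y:{..x}|lborel. (g (y + d) - g y) / d) = (LINT y|lborel. (indicator {..x} y * g (y + d) - indicator {..x} y * g y) / d)"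
    unfolding set_lebesgue_integral_def by (rule Bochner_Integration.integral_cong) (auto simp: algebra_simps diff_divide_distrib)
  also have "\<dots> = ((LINT y|lborel. indicator {..x} y * g (y + d)) - (LINT y|lborel. indicator {..x} y * g y)) / d"
    using i1 i2 by simp
  also have "(LINT y|lborel. indicator {..x} y * g (y + d)) = (LINT y|lborel. indicator {..x+d} (y + d) * g (y + d))"
    by (rule Bochner_Integration.integral_cong) (auto simp: indicator_def)
  also have "\<dots> = (LINT y|lborel. indicator {..x+d} y * g y)"
    by (rule int_shift[of "\<lambda>y. indicator {..x+d} y * g y" d])
  finally show ?thesis unfolding Gf_def set_lebesgue_integral_def by simp
qed

lemma H_is_conv:
  fixes F g H :: "real \<Rightarrow> real"
  assumes F: "BC F" and g: "integrable lborel g" and H: "is_conv_L1_prim F g H"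
  shows "H = conv_L F g"
proof -
  define \<Phi> where "\<Phi> = conv_L F g"
  define dd where "dd = (\<lambda>n::nat. 1 / real (Suc n))"
  have dd0: "dd n > 0" for n unfolding dd_def by simp
  define hn where "hn = (\<lambda>n y. (g (y + dd n) - g y) / dd n)"
  define gn where "gn = (\<lambda>n x. LINT y:{..x}|lborel. hn n y)"
  have ihn: "integrable lborel (hn n)" for n
    unfolding hn_def using intg_shift[OF g] g by auto
  have gnU: "gn n = Uf g n" for n
  proof
    fix x
    show "gn n x = Uf g n x"
      unfolding gn_def hn_def Uf_def using gn_eq[OF g dd0[of n], of x] by (simp add: dd_def)
  qed
  have L1gn: "\<forall>n. L1 (gn n) \<and> BV (gn n)"
    unfolding gnU L1_def using Uf_L1(1)[OF g] Uf_BV[OF g] by auto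
  have cgn: "(\<lambda>n. LINT y|lborel. \<bar>gn n y - g y\<bar>) \<longlonglongrightarrow> 0"
    unfolding gnU using Uf_L1(2)[OF g] .
  have BCH: "BC H" and Hp: "\<forall>e>0. \<forall>\<^sub>F n in sequentially. \<forall>a b. a \<le> b \<longrightarrow>
            \<bar>integral {a..b} (conv_BV F (gn n)) - (H b - H a)\<bar> \<le> e"
    using H L1gn cgn unfolding is_conv_L1_prim_def by blast+
  have cPhi: "isCont \<Phi> x" for x unfolding \<Phi>_def by (rule conv_L_cont[OF F g])
  have cbv: "conv_BV F (gn n) x = (\<Phi> (x + dd n) - \<Phi> x) / dd n" for n x
  proof -
    have "conv_BV F (gn n) x = conv_L F (hn n) x"
      unfolding gn_def by (rule conv_BV_abs[OF F ihn])
    also have "\<dots> = ((LINT y|lborel. F (x - y) * g (y + dd n)) - (LINT y|lborel. F (x - y) * g y)) / dd n"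
    proof -
      have "conv_L F (hn n) x = (LINT y|lborel. (F (x - y) * g (y + dd n) - F (x - y) * g y) / dd n)"
        unfolding conv_L_def hn_def by (simp add: algebra_simps diff_divide_distrib)
      also have "\<dots> = ((LINT y|lborel. F (x - y) * g (y + dd n)) - (LINT y|lborel. F (x - y) * g y)) / dd n"
        using conv_L_intg[OF F intg_shift[OF g, of "dd n"], of x] conv_L_intg[OF F g, of x] by simp
      finally show ?thesis .
    qed
    also have "\<dots> = (conv_L F (\<lambda>y. g (y + dd n)) x - conv_L F g x) / dd n" unfolding conv_L_def ..
    also have "\<dots> = (\<Phi> (x + dd n) - \<Phi> x) / dd n" unfolding conv_L_shift \<Phi>_def ..
    finally show ?thesis .
  qed
  have diffeq: "H b - H a = \<Phi> b - \<Phi> a" if ab: "a \<le> b" for a b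
  proof -
    have l1: "(\<lambda>n. integral {a..b} (conv_BV F (gn n))) \<longlonglongrightarrow> \<Phi> b - \<Phi> a"
      using S7[OF cPhi ab] unfolding cbv dd_def by simp
    have l2: "(\<lambda>n. integral {a..b} (conv_BV F (gn n))) \<longlonglongrightarrow> H b - H a"
    proof (rule LIMSEQ_I)
      fix e :: real assume e: "e > 0"
      have "\<forall>\<^sub>F n in sequentially. \<forall>a b. a \<le> b \<longrightarrow> \<bar>integral {a..b} (conv_BV F (gn n)) - (H b - H a)\<bar> \<le> e/2"
        using Hp[rule_format, of "e/2"] e by linarith
      then obtain N where N: "\<And>n. n \<ge> N \<Longrightarrow> \<forall>a b. a \<le> b \<longrightarrow> \<bar>integral {a..b} (conv_BV F (gn n)) - (H b - H a)\<bar> \<le> e/2"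
        unfolding eventually_sequentially by blast
      show "\<exists>no. \<forall>n\<ge>no. norm (integral {a..b} (conv_BV F (gn n)) - (H b - H a)) < e"
      proof (intro exI allI impI)
        fix n assume "n \<ge> N"
        then have "\<bar>integral {a..b} (conv_BV F (gn n)) - (H b - H a)\<bar> \<le> e/2" using N ab by blast
        then show "norm (integral {a..b} (conv_BV F (gn n)) - (H b - H a)) < e" using e by simp
      qed
    qed
    show ?thesis using LIMSEQ_unique[OF l2 l1] .
  qed
  have H0: "(H \<longlongrightarrow> 0) at_bot" using BCH unfolding BC_def by blast
  have P0: "(\<Phi> \<longlongrightarrow> 0) at_bot" unfolding \<Phi>_def by (rule conv_L_bot[OF F g])
  show ?thesis
  proof
    fix b
    have t1: "((\<lambda>a. H b - \<Phi> b + \<Phi> a) \<longlongrightarrow> H b - \<Phi> b + 0) at_bot"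
      by (intro tendsto_intros P0)
    have ev: "\<forall>\<^sub>F a in at_bot. H b - \<Phi> b + \<Phi> a = H a"
      using eventually_le_at_bot[of b] by eventually_elim (use diffeq in force)
    have t2: "((\<lambda>a. H b - \<Phi> b + \<Phi> a) \<longlongrightarrow> 0) at_bot"
      using tendsto_cong[OF ev] H0 by simp
    have "H b - \<Phi> b + 0 = 0" by (rule tendsto_unique[OF _ t1 t2]) simp
    then show "H b = conv_L F g b" unfolding \<Phi>_def by simp
  qed
qed



lemma test_fun_props:
  assumes "test_fun \<phi>"
  obtains R where "\<And>x. isCont (deriv \<phi>) x" "\<And>x. \<bar>x\<bar> > R \<Longrightarrow> deriv \<phi> x = 0"
proof -
  from assms obtain R where d: "\<And>n x. ((deriv ^^ n) \<phi>) differentiable (at x)" and R: "\<And>x. \<bar>x\<bar> > R \<Longrightarrow> \<phi> x = 0"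
    unfolding test_fun_def by blast
  have c: "isCont (deriv \<phi>) x" for x
    using differentiable_imp_continuous_within[OF d[of 1 x]] by simp
  have z: "deriv \<phi> x = 0" if x: "\<bar>x\<bar> > R" for x
  proof -
    have d0: "\<phi> differentiable (at x)" using d[of 0 x] by simp
    have D1: "(\<phi> has_real_derivative deriv \<phi> x) (at x)" using d0 DERIV_deriv_iff_real_differentiable by blast
    have D2: "((\<lambda>_. 0) has_real_derivative 0) (at x)" by simp
    have "open {x::real. R < \<bar>x\<bar>}" by (intro open_Collect_less continuous_intros)
    then have D3: "(\<phi> has_real_derivative 0) (at x)"
      by (rule has_field_derivative_transform_within_open[OF D2]) (use x R in auto)
    show ?thesis using DERIV_unique[OF D1 D3] .
  qed
  show ?thesis using that c z by blast
qed

lemma integrable_test: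
  fixes P :: "real \<Rightarrow> real"
  assumes P: "\<And>x. isCont P x" and t: "test_fun \<phi>"
  shows "integrable lborel (\<lambda>x. P x * deriv \<phi> x)"
proof -
  obtain R where c: "\<And>x. isCont (deriv \<phi>) x" and z: "\<And>x. \<bar>x\<bar> > R \<Longrightarrow> deriv \<phi> x = 0"
    using test_fun_props[OF t] by blast
  have "continuous_on {-R..R} (\<lambda>x. P x * deriv \<phi> x)"
    by (intro continuous_at_imp_continuous_on ballI continuous_intros P c)
  then have "integrable lborel (\<lambda>x. indicator {-R..R} x *\<^sub>R (P x * deriv \<phi> x))"
    by (intro borel_integrable_compact) auto
  moreover have "(\<lambda>x. indicator {-R..R} x *\<^sub>R (P x * deriv \<phi> x)) = (\<lambda>x. P x * deriv \<phi> x)"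
  proof
    fix x show "indicator {-R..R} x *\<^sub>R (P x * deriv \<phi> x) = P x * deriv \<phi> x"
    proof (cases "x \<in> {-R..R}")
      case False
      then have "R < \<bar>x\<bar>" by (auto simp: abs_if)
      then show ?thesis using z[of x] False by simp
    qed simp
  qed
  ultimately show ?thesis by simp
qed

theorem mainTheorem14:
  fixes F g G H :: "real \<Rightarrow> real"
  assumes F: "BC F"
    and g: "L1 g"
    and G: "\<And>x. G x = (LINT y:{..x}|lborel. g y)"
    and H: "is_conv_L1_prim F g H"
  shows "same_dist_deriv H (conv_L F g) \<and> same_dist_deriv H (conv_BV F G)
       \<and> (\<forall>\<alpha> \<beta> :: ereal. \<alpha> < \<beta> \<longrightarrow>
            (\<exists>Ha Hb Pa Pb Qa Qb.
               ext_val H \<alpha> Ha \<and> ext_val H \<beta> Hb \<and>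
               ext_val (conv_L F g) \<alpha> Pa \<and> ext_val (conv_L F g) \<beta> Pb \<and>
               ext_val (conv_BV F G) \<alpha> Qa \<and> ext_val (conv_BV F G) \<beta> Qb \<and>
               Hb - Ha = Pb - Pa \<and> Pb - Pa = Qb - Qa))"
proof -
  have g': "integrable lborel g" using g unfolding L1_def .
  have HP: "H = conv_L F g" by (rule H_is_conv[OF F g' H])
  have Gd: "G = (\<lambda>x. LINT y:{..x}|lborel. g y)" using G by auto
  have QP: "conv_BV F G = conv_L F g" unfolding Gd using conv_BV_abs[OF F g'] by auto
  have cP: "\<And>x. isCont (conv_L F g) x" by (rule conv_L_cont[OF F g'])
  have sd: "same_dist_deriv (conv_L F g) (conv_L F g)"
    unfolding same_dist_deriv_def using integrable_test[OF cP] by auto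
  obtain L where L: "(F \<longlongrightarrow> L) at_top" using F unfolding BC_def by blast
  define v where "v = (\<lambda>t::ereal. if t = \<infinity> then L * (LINT y|lborel. g y) else if t = -\<infinity> then 0
                          else conv_L F g (real_of_ereal t))"
  have ev: "ext_val (conv_L F g) t (v t)" for t
    unfolding ext_val_def v_def using conv_L_top[OF F g' L] conv_L_bot[OF F g'] by auto
  show ?thesis
    unfolding HP QP using sd ev by blast
qed


end
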